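(* Let $X$ be a locally compact space and $f\colon X\to\mathbb{C}$. The following are equivalent: (i) $f\in C_c(X)$; (ii) $f^{-1}(\mathbb{C}^* )$ is relatively quasi-compact, and for every filter $\mathcal{F}$ on $X$ such that the image filter $i(\mathcal{F})$ converges in $\mathcal{H}X$ to some $S\in\mathcal{H}X$ (where $i\colon X\to\mathcal{H}X$, $x\mapsto\{x\}$), one has $\lim_{\mathcal{F}}f=\sum_{s\in S}f(s)$.
   Context: Quasi-compact: every open cover has a finite subcover; relatively quasi-compact: contained in a quasi-compact set; locally compact: every point has a quasi-compact Hausdorff neighbourhood (the space need not be Hausdorff). $C_c(X)$ is the linear span of the functions $g\colon X\to\mathbb{C}$ for which there is an open Hausdorff $V\subset X$ with $g|_V\in C_c(V)$ and $g=0$ outside $V$. $\mathcal{H}X$ is the set of nonempty $S\subset X$ such that every finite family of open sets each meeting $S$ has nonempty intersection, with the topology generated by $\{S:S\cap V\neq\emptyset\}$ ($V$ open) and $\{S:S\cap Q=\emptyset\}$ ($Q$ quasi-compact). *)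

theory Defs
  imports "HOL-Analysis.Analysis"
begin

text \<open>The space X is the type 'a with its topology (class topological_space).
  Isabelle's compact is defined by open covers, i.e. it is quasi-compactness.\<close>

definition rel_qcompact :: "'a::topological_space set \<Rightarrow> bool" where
  "rel_qcompact A \<longleftrightarrow> (\<exists>K. compact K \<and> A \<subseteq> K)"

definition locally_qc_Hausdorff :: "'a::topological_space itself \<Rightarrow> bool" where
  "locally_qc_Hausdorff TYPE('a) \<longleftrightarrow>
     (\<forall>x::'a. \<exists>U K. open U \<and> x \<in> U \<and> U \<subseteq> K \<and> compact K
        \<and> Hausdorff_space (subtopology euclidean K))"

text \<open>Generators of C_c(X): g vanishes outside an open Hausdorff V and g restricted to V
  lies in C_c(V) (continuous, with support quasi-compact in V).\<close>
definition Cc_generator :: "('a::topological_space \<Rightarrow> complex) \<Rightarrow> bool" where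
  "Cc_generator g \<longleftrightarrow> (\<exists>V. open V \<and> Hausdorff_space (subtopology euclidean V)
      \<and> continuous_on V g
      \<and> compactin (subtopology euclidean V)
           ((subtopology euclidean V) closure_of {x\<in>V. g x \<noteq> 0})
      \<and> (\<forall>x. x \<notin> V \<longrightarrow> g x = 0))"

definition Cc :: "('a::topological_space \<Rightarrow> complex) set" where
  "Cc = {f. \<exists>(n::nat) (c::nat \<Rightarrow> complex) g. (\<forall>i<n. Cc_generator (g i))
                 \<and> f = (\<lambda>x. \<Sum>i<n. c i * g i x)}"

definition HX :: "'a::topological_space set set" where
  "HX = {S. S \<noteq> {} \<and> (\<forall>\<U>. finite \<U> \<and> (\<forall>U\<in>\<U>. open U \<and> U \<inter> S \<noteq> {}) \<longrightarrow> \<Inter>\<U> \<noteq> {})}"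

definition HX_topology :: "'a::topological_space set topology" where
  "HX_topology = subtopology
     (topology_generated_by
        ({{S. S \<inter> V \<noteq> {}} | V. open V} \<union> {{S. S \<inter> Q = {}} | Q. compact Q}))
     HX"

end

theory Submission
  imports Defs
begin

lemma open_Hausdorff_sub:
  assumes "U \<subseteq> K" "Hausdorff_space (subtopology euclidean K)"
  shows "Hausdorff_space (subtopology euclidean U)"
proof -
  have "subtopology (subtopology euclidean K) U = subtopology euclidean U"
    using assms(1) by (simp add: subtopology_subtopology Int_absorb1)
  then show ?thesis using Hausdorff_space_subtopology[OF assms(2), of U] by simp
qed

lemma HX_D:
  assumes "S \<in> HX" "finite \<U>" "\<And>U. U \<in> \<U> \<Longrightarrow> open U" "\<And>U. U \<in> \<U> \<Longrightarrow> U \<inter> S \<noteq> {}"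
  shows "\<Inter>\<U> \<noteq> {}"
proof -
  have "\<forall>\<U>. finite \<U> \<and> (\<forall>U\<in>\<U>. open U \<and> U \<inter> S \<noteq> {}) \<longrightarrow> \<Inter>\<U> \<noteq> {}"
    using assms(1) unfolding HX_def by simp
  then show ?thesis using assms(2-4) by simp
qed

lemma HX_Hausdorff_le1:
  assumes "open U" "Hausdorff_space (subtopology euclidean U)" "S \<in> HX"
    "s \<in> S" "t \<in> S" "s \<in> U" "t \<in> U"
  shows "s = t"
proof (rule ccontr)
  assume st: "s \<noteq> t"
  have "s \<in> topspace (subtopology euclidean U)" "t \<in> topspace (subtopology euclidean U)"
    using assms(6,7) by auto
  then obtain A B where AB: "openin (subtopology euclidean U) A" "openin (subtopology euclidean U) B"
    "s \<in> A" "t \<in> B" "disjnt A B"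
    using assms(2) st unfolding Hausdorff_space_def by blast
  have "open A" "open B" using AB(1,2) openin_open_eq[OF assms(1)] by auto
  have "\<Inter>{A,B} \<noteq> {}"
  proof (rule HX_D[OF assms(3)])
    fix W assume "W \<in> {A, B}"
    then show "open W" "W \<inter> S \<noteq> {}" using \<open>open A\<close> \<open>open B\<close> AB(3,4) assms(4,5) by auto
  qed simp
  then show False using AB(5) by (auto simp: disjnt_def)
qed

lemma le1_finite: "(\<And>a b. a \<in> A \<Longrightarrow> b \<in> A \<Longrightarrow> a = b) \<Longrightarrow> finite A"
  by (metis finite.simps subsetI singletonI empty_iff finite_subset subset_singletonD equals0I)

lemma finite_HX_compact:
  assumes lc: "locally_qc_Hausdorff TYPE('a::topological_space)"
    and S: "S \<in> HX" and K: "compact (K::'a set)"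
  shows "finite (S \<inter> K)"
proof -
  have "\<forall>x::'a. \<exists>U. open U \<and> x \<in> U \<and> Hausdorff_space (subtopology euclidean U)"
  proof
    fix x :: 'a
    obtain U K where "open U" "x \<in> U" "U \<subseteq> K" "Hausdorff_space (subtopology euclidean K)"
      using lc unfolding locally_qc_Hausdorff_def by blast
    then show "\<exists>U. open U \<and> x \<in> U \<and> Hausdorff_space (subtopology euclidean U)"
      using open_Hausdorff_sub by blast
  qed
  then have "\<exists>U::'a \<Rightarrow> 'a set. \<forall>x. open (U x) \<and> x \<in> U x \<and> Hausdorff_space (subtopology euclidean (U x))"
    by (rule choice)
  then obtain U :: "'a \<Rightarrow> 'a set" where U: "\<And>x. open (U x)" "\<And>x. x \<in> U x" "\<And>x. Hausdorff_space (subtopology euclidean (U x))"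
    by blast
  obtain T where T: "T \<subseteq> K" "finite T" "K \<subseteq> (\<Union>x\<in>T. U x)"
    by (rule compactE_image[OF K, of K U]) (use U in auto)
  have sub: "S \<inter> K \<subseteq> (\<Union>x\<in>T. S \<inter> U x)" using T by auto
  have fin: "finite (S \<inter> U x)" for x
    by (rule le1_finite) (meson IntE HX_Hausdorff_le1[OF U(1) U(3) S])
  have "finite (\<Union>x\<in>T. S \<inter> U x)" by (rule finite_UN_I[OF T(2) fin])
  then show ?thesis using sub by (rule finite_subset[rotated])
qed

lemma HX_topology_open_basis:
  assumes "open V" shows "openin HX_topology ({T. T \<inter> V \<noteq> {}} \<inter> HX)"
  unfolding HX_topology_def openin_subtopology
  by (rule exI[of _ "{T. T \<inter> V \<noteq> {}}"]) (use assms in \<open>auto intro!: topology_generated_by_Basis\<close>)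

lemma HX_topology_compact_basis:
  assumes "compact Q" shows "openin HX_topology ({T. T \<inter> Q = {}} \<inter> HX)"
  unfolding HX_topology_def openin_subtopology
  by (rule exI[of _ "{T. T \<inter> Q = {}}"]) (use assms in \<open>auto intro!: topology_generated_by_Basis\<close>)

lemma limitin_HX_open:
  assumes "limitin HX_topology (\<lambda>x. {x}) S F" "S \<in> HX" "open V" "S \<inter> V \<noteq> {}"
  shows "eventually (\<lambda>x. x \<in> V) F"
proof -
  have "eventually (\<lambda>x. {x} \<in> {T. T \<inter> V \<noteq> {}} \<inter> HX) F"
    using assms HX_topology_open_basis[OF assms(3)] unfolding limitin_def by blast
  then show ?thesis by (rule eventually_mono) auto
qed

lemma limitin_HX_compact:
  assumes "limitin HX_topology (\<lambda>x. {x}) S F" "S \<in> HX" "compact Q" "S \<inter> Q = {}"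
  shows "eventually (\<lambda>x. x \<notin> Q) F"
proof -
  have "eventually (\<lambda>x. {x} \<in> {T. T \<inter> Q = {}} \<inter> HX) F"
    using assms HX_topology_compact_basis[OF assms(3)] unfolding limitin_def by blast
  then show ?thesis by (rule eventually_mono) auto
qed

lemma generator_supp:
  assumes g: "Cc_generator g" shows "rel_qcompact {x. g x \<noteq> 0}"
proof -
  obtain V where V: "open V" "compactin (subtopology euclidean V)
           ((subtopology euclidean V) closure_of {x\<in>V. g x \<noteq> 0})" "\<forall>x. x \<notin> V \<longrightarrow> g x = 0"
    using g unfolding Cc_generator_def by blast
  let ?C = "(subtopology euclidean V) closure_of {x\<in>V. g x \<noteq> 0}"
  have "compact ?C" using V(2) by (metis compactin_subtopology compactin_euclidean_iff)
  moreover have "{x. g x \<noteq> 0} \<subseteq> ?C"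
    using V(3) closure_of_subset[of "{x\<in>V. g x \<noteq> 0}" "subtopology euclidean V"] by auto
  ultimately show ?thesis unfolding rel_qcompact_def by blast
qed

lemma generator_lim:
  assumes g: "Cc_generator g" and F: "S \<in> HX" "limitin HX_topology (\<lambda>x. {x}) S F"
  shows "(g \<longlongrightarrow> infsum g S) F"
proof -
  obtain V where V: "open V" "Hausdorff_space (subtopology euclidean V)" "continuous_on V g"
    "compactin (subtopology euclidean V)
           ((subtopology euclidean V) closure_of {x\<in>V. g x \<noteq> 0})" "\<forall>x. x \<notin> V \<longrightarrow> g x = 0"
    using g unfolding Cc_generator_def by blast
  let ?C = "(subtopology euclidean V) closure_of {x\<in>V. g x \<noteq> 0}"
  show ?thesis
  proof (cases "\<exists>s\<in>S. s \<in> V")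
    case True
    then obtain s where s: "s \<in> S" "s \<in> V" by blast
    have "infsum g S = infsum g {s}"
    proof (rule infsum_cong_neutral)
      fix x assume "x \<in> S - {s}"
      then have "x \<notin> V" using HX_Hausdorff_le1[OF V(1) V(2) F(1) _ s(1) _ s(2)] by blast
      then show "g x = 0" using V(5) by blast
    qed (use s in auto)
    then have eq: "infsum g S = g s" by simp
    show ?thesis unfolding eq
    proof (rule topological_tendstoI)
      fix B assume B: "open B" "g s \<in> B"
      have "open (g -` B \<inter> V)" using continuous_on_open_vimage[OF V(1)] V(3) B(1) by blast
      moreover have "S \<inter> (g -` B \<inter> V) \<noteq> {}" using s B by blast
      ultimately have "eventually (\<lambda>x. x \<in> g -` B \<inter> V) F"
        by (rule limitin_HX_open[OF F(2) F(1)])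
      then show "eventually (\<lambda>x. g x \<in> B) F" by (rule eventually_mono) auto
    qed
  next
    case False
    then have eq: "infsum g S = 0" using V(5) by (simp add: infsum_0)
    have "compact ?C" using V(4) by (metis compactin_subtopology compactin_euclidean_iff)
    moreover have "?C \<subseteq> V" using closure_of_subset_topspace[of "subtopology euclidean V"] by auto
    moreover have "S \<inter> ?C = {}" using False calculation(2) by blast
    ultimately have "eventually (\<lambda>x. x \<notin> ?C) F"
      using limitin_HX_compact[OF F(2) F(1)] by blast
    then have "eventually (\<lambda>x. g x = 0) F"
    proof (rule eventually_mono)
      fix x assume "x \<notin> ?C"
      then show "g x = 0"
        using V(5) closure_of_subset[of "{x\<in>V. g x \<noteq> 0}" "subtopology euclidean V"] by auto
    qed
    then show ?thesis unfolding eq by (rule tendsto_eventually)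
  qed
qed

definition good :: "('a::topological_space \<Rightarrow> complex) \<Rightarrow> bool" where
  "good f \<longleftrightarrow> rel_qcompact {x. f x \<noteq> 0} \<and>
            (\<forall>(F::'a filter) S. F \<noteq> bot \<and> S \<in> HX \<and> limitin HX_topology (\<lambda>x. {x}) S F
                \<longrightarrow> (f \<longlongrightarrow> infsum f S) F)"

lemma good_generator: "Cc_generator g \<Longrightarrow> good g"
  unfolding good_def using generator_supp generator_lim by blast

lemma good_zero: "good (\<lambda>x. 0)"
  unfolding good_def rel_qcompact_def by auto

lemma good_summable:
  assumes lc: "locally_qc_Hausdorff TYPE('a::topological_space)"
    and f: "good (f::'a \<Rightarrow> complex)" and S: "S \<in> HX"
  shows "f summable_on S"
proof -
  obtain K where K: "compact K" "{x. f x \<noteq> 0} \<subseteq> K" using f unfolding good_def rel_qcompact_def by blast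
  have "finite (S \<inter> K)" by (rule finite_HX_compact[OF lc S K(1)])
  moreover have "{x\<in>S. f x \<noteq> 0} \<subseteq> S \<inter> K" using K(2) by blast
  ultimately have "finite {x\<in>S. f x \<noteq> 0}" using finite_subset by blast
  then show ?thesis by (rule finite_nonzero_values_imp_summable_on)
qed

lemma good_add:
  assumes lc: "locally_qc_Hausdorff TYPE('a::topological_space)"
    and f: "good (f::'a \<Rightarrow> complex)" and g: "good g"
  shows "good (\<lambda>x. f x + g x)"
proof -
  obtain K1 where K1: "compact K1" "{x. f x \<noteq> 0} \<subseteq> K1" using f unfolding good_def rel_qcompact_def by blast
  obtain K2 where K2: "compact K2" "{x. g x \<noteq> 0} \<subseteq> K2" using g unfolding good_def rel_qcompact_def by blast
  have "rel_qcompact {x. f x + g x \<noteq> 0}"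
    unfolding rel_qcompact_def
    by (rule exI[of _ "K1 \<union> K2"]) (use K1 K2 compact_Un in fastforce)
  moreover have "((\<lambda>x. f x + g x) \<longlongrightarrow> infsum (\<lambda>x. f x + g x) S) F"
    if "F \<noteq> bot" "S \<in> HX" "limitin HX_topology (\<lambda>x. {x}) S F" for F S
  proof -
    have "infsum (\<lambda>x. f x + g x) S = infsum f S + infsum g S"
      by (rule infsum_add) (use good_summable[OF lc f that(2)] good_summable[OF lc g that(2)] in auto)
    moreover have "(f \<longlongrightarrow> infsum f S) F" "(g \<longlongrightarrow> infsum g S) F"
      using f g that unfolding good_def by blast+
    ultimately show ?thesis by (simp add: tendsto_add)
  qed
  ultimately show ?thesis unfolding good_def by blast
qed

lemma good_scale:
  assumes f: "good (f::'a::topological_space \<Rightarrow> complex)"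
  shows "good (\<lambda>x. c * f x)"
proof -
  have "rel_qcompact {x. c * f x \<noteq> 0}"
    using f unfolding good_def rel_qcompact_def by auto
  moreover have "((\<lambda>x. c * f x) \<longlongrightarrow> infsum (\<lambda>x. c * f x) S) F"
    if "F \<noteq> bot" "S \<in> HX" "limitin HX_topology (\<lambda>x. {x}) S F" for F S
  proof -
    have "(f \<longlongrightarrow> infsum f S) F" using f that unfolding good_def by blast
    then show ?thesis unfolding infsum_cmult_right' by (rule tendsto_mult_left)
  qed
  ultimately show ?thesis unfolding good_def by blast
qed

lemma Cc_good:
  assumes lc: "locally_qc_Hausdorff TYPE('a::topological_space)"
    and f: "(f::'a \<Rightarrow> complex) \<in> Cc"
  shows "good f"
proof -
  obtain n and c :: "nat \<Rightarrow> complex" and g :: "nat \<Rightarrow> 'a \<Rightarrow> complex" where g: "\<forall>i<n. Cc_generator (g i)" and fe: "f = (\<lambda>x. \<Sum>i<n. c i * g i x)"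
    using f unfolding Cc_def by auto
  have "good (\<lambda>x. \<Sum>i<m. c i * g i x)" if "m \<le> n" for m
    using that
  proof (induction m)
    case 0
    then show ?case using good_zero by simp
  next
    case (Suc m)
    have "good (\<lambda>x. (\<Sum>i<m. c i * g i x) + c m * g m x)"
    proof (rule good_add[OF lc])
      show "good (\<lambda>x. \<Sum>i<m. c i * g i x)" using Suc by simp
      have "Cc_generator (g m)" using Suc(2) g by simp
      then show "good (\<lambda>x. c m * g m x)" using good_scale[OF good_generator, of "g m" "c m"] by simp
    qed
    then show ?case by simp
  qed
  then show ?thesis unfolding fe by simp
qed

definition ultra :: "'a filter \<Rightarrow> bool" where
  "ultra G \<longleftrightarrow> G \<noteq> bot \<and> (\<forall>P. eventually P G \<or> eventually (\<lambda>x. \<not> P x) G)"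

lemma ex_ultra:
  fixes F :: "'a filter"
  assumes F: "F \<noteq> bot"
  shows "\<exists>G\<le>F. ultra G"
proof -
  let ?R = "{(b, a). a \<noteq> bot \<and> a \<le> b \<and> b \<le> F}"
  have bot_notin: "c \<in> Chains ?R \<Longrightarrow> bot \<notin> c" for c
    by (auto simp: Chains_def)
  have FR[simp]: "Field ?R = {G. G \<noteq> bot \<and> G \<le> F}"
    by (auto simp: Field_def bot_unique)
  have "\<exists>m\<in>Field ?R. \<forall>a\<in>Field ?R. (m, a) \<in> ?R \<longrightarrow> a = m"
  proof (rule Zorns_po_lemma)
    show "Partial_order ?R"
      by (auto simp: partial_order_on_def preorder_on_def
          antisym_def refl_on_def trans_def Field_def bot_unique)
    show "\<exists>u\<in>Field ?R. \<forall>a\<in>C. (a, u) \<in> ?R" if C: "C \<in> Chains ?R" for C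
    proof (cases "C = {}")
      case True
      then show ?thesis using F by auto
    next
      case False
      have "Inf C = bot \<longleftrightarrow> (\<exists>x\<in>C. x = bot)"
        unfolding trivial_limit_def using C False
        by (intro eventually_Inf_base) (auto simp: Chains_def)
      then have "Inf C \<noteq> bot" using bot_notin[OF C] by auto
      moreover from False obtain x where "x \<in> C" by auto
      then have "Inf C \<le> F" using C by (auto intro!: Inf_lower2[of x] simp: Chains_def)
      ultimately show ?thesis using C
        by (intro bexI[of _ "Inf C"]) (auto intro: Inf_lower simp: Chains_def)
    qed
  qed
  then obtain U where U: "U \<noteq> bot" "U \<le> F" "\<And>G. G \<noteq> bot \<Longrightarrow> G \<le> U \<Longrightarrow> G = U"
    by auto
  have "ultra U"
    unfolding ultra_def
  proof (intro conjI allI U(1) disjCI)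
    fix P assume nev: "\<not> eventually (\<lambda>x. \<not> P x) U"
    have "inf U (principal {x. P x}) \<noteq> bot"
      using nev by (simp add: trivial_limit_def eventually_inf_principal)
    then have eq: "inf U (principal {x. P x}) = U" by (rule U(3)) simp
    have "eventually P (inf U (principal {x. P x}))" by (simp add: eventually_inf_principal)
    then show "eventually P U" using eq by simp
  qed
  then show ?thesis using U(2) by blast
qed

lemma singleton_HX: "{x} \<in> HX"
proof -
  have "\<Inter>\<U> \<noteq> {}" if "\<forall>U\<in>\<U>. open U \<and> U \<inter> {x} \<noteq> {}" for \<U> :: "'a set set"
  proof -
    have "x \<in> \<Inter>\<U>" using that by auto
    then show ?thesis by auto
  qed
  then show ?thesis unfolding HX_def by simp
qed

lemma ultra_cluster_lim:
  assumes G: "ultra G" and c: "inf (nhds q) G \<noteq> bot"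
  shows "G \<le> nhds q"
  unfolding le_nhds
proof (intro allI impI)
  fix W assume W: "open W \<and> q \<in> W"
  show "eventually (\<lambda>x. x \<in> W) G"
  proof (rule ccontr)
    assume "\<not> eventually (\<lambda>x. x \<in> W) G"
    then have "eventually (\<lambda>x. x \<notin> W) G" using G unfolding ultra_def by blast
    moreover have "eventually (\<lambda>x. x \<in> W) (nhds q)" using W eventually_nhds by blast
    ultimately have "eventually (\<lambda>x. False) (inf (nhds q) G)"
      unfolding eventually_inf by blast
    then show False using c by (simp add: trivial_limit_def)
  qed
qed

lemma ultra_HX:
  assumes G: "ultra G" and a: "G \<le> nhds a"
  defines "S \<equiv> {s. G \<le> nhds s}"
  shows "S \<in> HX" "limitin HX_topology (\<lambda>x. {x}) S G"
proof -
  have Gbot: "G \<noteq> bot" using G unfolding ultra_def by blast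
  have evS: "eventually (\<lambda>x. x \<in> V) G" if V: "open V" "S \<inter> V \<noteq> {}" for V
  proof -
    obtain s where "s \<in> S" "s \<in> V" using V by blast
    then show ?thesis using V(1) unfolding S_def le_nhds by blast
  qed
  have "\<Inter>\<U> \<noteq> {}" if "finite \<U>" "\<forall>U\<in>\<U>. open U \<and> U \<inter> S \<noteq> {}" for \<U>
  proof -
    have "\<forall>U\<in>\<U>. eventually (\<lambda>x. x \<in> U) G" using that(2) evS by blast
    then have "eventually (\<lambda>x. \<forall>U\<in>\<U>. x \<in> U) G" by (rule eventually_ball_finite[OF that(1)])
    then obtain x where "\<forall>U\<in>\<U>. x \<in> U" using eventually_happens'[OF Gbot] by blast
    then show ?thesis by blast
  qed
  moreover have "S \<noteq> {}" using a unfolding S_def by blast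
  ultimately show SHX: "S \<in> HX" unfolding HX_def by simp
  define \<B> where "\<B> = ({{S. S \<inter> V \<noteq> {}} | V. open V} \<union> {{S. S \<inter> Q = {}} | Q::'a set. compact Q})"
  have gen: "eventually (\<lambda>x. {x} \<in> T) G" if "generate_topology_on \<B> T" "S \<in> T" for T
    using that
  proof (induction rule: generate_topology_on.induct)
    case Empty
    then show ?case by simp
  next
    case (Int a b)
    then show ?case by (simp add: eventually_conj)
  next
    case (UN K)
    then obtain k where "k \<in> K" "S \<in> k" by blast
    then have "eventually (\<lambda>x. {x} \<in> k) G" using UN by blast
    then show ?case
    proof (rule eventually_mono)
      fix x assume "{x} \<in> k" then show "{x} \<in> \<Union>K" by (rule UnionI[OF \<open>k \<in> K\<close>])
    qed
  next
    case (Basis s)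
    have "(\<exists>V. s = {T. T \<inter> V \<noteq> {}} \<and> open V) \<or> (\<exists>Q. s = {T. T \<inter> Q = {}} \<and> compact Q)"
      using Basis(1) unfolding \<B>_def by (simp only: Un_iff mem_Collect_eq)
    then consider (V) V where "open V" "s = {S. S \<inter> V \<noteq> {}}" | (Q) Q where "compact Q" "s = {S. S \<inter> Q = {}}"
      by blast
    then show ?case
    proof cases
      case V
      then have "eventually (\<lambda>x. x \<in> V) G" using evS Basis(2) by blast
      then show ?thesis by (rule eventually_mono) (use V in auto)
    next
      case Q
      have SQ: "S \<inter> Q = {}" using Basis(2) Q by blast
      have "eventually (\<lambda>x. x \<notin> Q) G"
      proof (rule ccontr)
        assume "\<not> eventually (\<lambda>x. x \<notin> Q) G"
        then have "eventually (\<lambda>x. x \<in> Q) G" using G unfolding ultra_def by fastforce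
        then obtain q where "q \<in> Q" "inf (nhds q) G \<noteq> bot"
          using Q(1) Gbot unfolding compact_filter by blast
        then have "q \<in> S" unfolding S_def using ultra_cluster_lim[OF G] by blast
        then show False using SQ \<open>q \<in> Q\<close> by blast
      qed
      then show ?thesis by (rule eventually_mono) (use Q in auto)
    qed
  qed
  show "limitin HX_topology (\<lambda>x. {x}) S G"
    unfolding limitin_def
  proof (intro conjI allI impI)
    have "S \<in> \<Union>\<B>" unfolding \<B>_def by blast
    then show "S \<in> topspace HX_topology" using SHX unfolding HX_topology_def \<B>_def by simp
  next
    fix T assume T: "openin HX_topology T \<and> S \<in> T"
    then obtain T' where T': "generate_topology_on \<B> T'" "T = T' \<inter> HX"
      unfolding HX_topology_def openin_subtopology \<B>_def openin_topology_generated_by_iff by blast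
    have "eventually (\<lambda>x. {x} \<in> T') G" using gen T T' by blast
    then show "eventually (\<lambda>x. {x} \<in> T) G" by (rule eventually_mono) (use T' singleton_HX in blast)
  qed
qed

lemma loc_shrink:
  assumes U: "open U" "U \<subseteq> K" "compact K" "Hausdorff_space (subtopology euclidean K)" "y \<in> U"
  shows "\<exists>N L. open N \<and> y \<in> N \<and> N \<subseteq> L \<and> L \<subseteq> U \<and> compact L"
proof -
  let ?X = "subtopology euclidean K"
  have cs: "compact_space ?X" using compact_space_subtopology[of euclidean K] U(3) by simp
  have reg: "regular_space ?X" by (rule compact_Hausdorff_imp_regular_space[OF cs U(4)])
  have "closedin ?X (K \<inter> -U)" using U(1) by (intro closedin_closed_Int) auto
  moreover have "y \<in> topspace ?X - (K \<inter> -U)" using U by auto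
  ultimately obtain N where N: "openin ?X N" "y \<in> N" "disjnt (K \<inter> -U) (?X closure_of N)"
    using reg unfolding regular_space by blast
  let ?L = "?X closure_of N"
  have LK: "?L \<subseteq> K" using closure_of_subset_topspace[of ?X N] by simp
  have LU: "?L \<subseteq> U" using LK N(3) by (auto simp: disjnt_def)
  have NL: "N \<subseteq> ?L" using closure_of_subset[of N ?X] openin_subset[OF N(1)] by simp
  have "compactin ?X ?L" using closedin_compact_space[OF cs] closedin_closure_of by blast
  then have cL: "compact ?L" by (metis compactin_subtopology compactin_euclidean_iff)
  obtain N' where N': "open N'" "N = K \<inter> N'" using N(1) openin_open by blast
  then have "N = N' \<inter> U" using NL LU U(2) by blast
  then have "open N" using N'(1) U(1) by auto
  then show ?thesis using N(2) NL LU cL by blast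
qed

definition Hfam :: "(nat \<Rightarrow> 'a::topological_space set) \<Rightarrow> (nat \<Rightarrow> 'a set) \<Rightarrow> nat \<Rightarrow> bool" where
  "Hfam U K n \<longleftrightarrow> (\<forall>j<n. open (U j) \<and> U j \<subseteq> K j \<and> compact (K j) \<and> Hausdorff_space (subtopology euclidean (K j)))"

lemma shrink:
  assumes H: "Hfam U K n" and M: "compact M" "M \<subseteq> (\<Union>j<n. U j)"
  shows "\<exists>W C. (\<forall>j<n. open (W j) \<and> W j \<subseteq> C j \<and> C j \<subseteq> U j \<and> compact (C j)) \<and> M \<subseteq> (\<Union>j<n. W j)"
proof -
  have "\<forall>y\<in>M. \<exists>j. j < n \<and> (\<exists>N L. open N \<and> y \<in> N \<and> N \<subseteq> L \<and> L \<subseteq> U j \<and> compact L)"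
  proof
    fix y assume "y \<in> M"
    then obtain j where j: "j < n" "y \<in> U j" using M(2) by blast
    have Hj: "open (U j)" "U j \<subseteq> K j" "compact (K j)" "Hausdorff_space (subtopology euclidean (K j))"
      using H j(1) unfolding Hfam_def by auto
    show "\<exists>j. j < n \<and> (\<exists>N L. open N \<and> y \<in> N \<and> N \<subseteq> L \<and> L \<subseteq> U j \<and> compact L)"
      using loc_shrink[OF Hj j(2)] j(1) by blast
  qed
  then obtain jj where jj: "\<forall>y\<in>M. jj y < n \<and> (\<exists>N L. open N \<and> y \<in> N \<and> N \<subseteq> L \<and> L \<subseteq> U (jj y) \<and> compact L)"
    by (rule bchoice[THEN exE]) blast
  then obtain NN where NN: "\<forall>y\<in>M. open (NN y) \<and> y \<in> NN y \<and> (\<exists>L. NN y \<subseteq> L \<and> L \<subseteq> U (jj y) \<and> compact L)"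
    by (metis (mono_tags, lifting) bchoice)
  then obtain LL where LL: "\<forall>y\<in>M. NN y \<subseteq> LL y \<and> LL y \<subseteq> U (jj y) \<and> compact (LL y)"
    by (metis (mono_tags, lifting) bchoice)
  obtain T where T: "T \<subseteq> M" "finite T" "M \<subseteq> (\<Union>y\<in>T. NN y)"
    by (rule compactE_image[OF M(1), of M NN]) (use NN in auto)
  define W where "W j = (\<Union>y\<in>{y\<in>T. jj y = j}. NN y)" for j
  define C where "C j = (\<Union>y\<in>{y\<in>T. jj y = j}. LL y)" for j
  have "open (W j) \<and> W j \<subseteq> C j \<and> C j \<subseteq> U j \<and> compact (C j)" for j
  proof (intro conjI)
    show "open (W j)" unfolding W_def using NN T(1) by blast
    show "W j \<subseteq> C j" unfolding W_def C_def using LL T(1) by blast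
    show "C j \<subseteq> U j" unfolding C_def using LL T(1) by blast
    have "finite {y\<in>T. jj y = j}" using T(2) by simp
    then show "compact (C j)" unfolding C_def using LL T(1) by (intro compact_UN) auto
  qed
  moreover have "M \<subseteq> (\<Union>j<n. W j)"
  proof
    fix x assume "x \<in> M"
    then obtain y where y: "y \<in> T" "x \<in> NN y" using T(3) by blast
    then have "jj y < n" using jj T(1) by blast
    moreover have "x \<in> W (jj y)" unfolding W_def using y by blast
    ultimately show "x \<in> (\<Union>j<n. W j)" by blast
  qed
  ultimately show ?thesis by blast
qed

lemma Cc_zero: "(\<lambda>x. 0) \<in> Cc"
  unfolding Cc_def by (rule CollectI, rule exI[of _ 0]) auto

lemma Cc_add_gen:
  assumes h: "(h::'a::topological_space \<Rightarrow> complex) \<in> Cc" and g: "Cc_generator g"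
  shows "(\<lambda>x. h x + g x) \<in> Cc"
proof -
  obtain m and c :: "nat \<Rightarrow> complex" and gs :: "nat \<Rightarrow> 'a \<Rightarrow> complex" where
    gs: "\<forall>i<m. Cc_generator (gs i)" and he: "h = (\<lambda>x. \<Sum>i<m. c i * gs i x)"
    using h unfolding Cc_def by auto
  define c' where "c' = c(m := 1)"
  define gs' where "gs' = gs(m := g)"
  have "\<forall>i<Suc m. Cc_generator (gs' i)" using gs g unfolding gs'_def by (auto simp: less_Suc_eq)
  moreover have "(\<lambda>x. h x + g x) = (\<lambda>x. \<Sum>i<Suc m. c' i * gs' i x)"
  proof
    fix x
    have "(\<Sum>i<m. c' i * gs' i x) = (\<Sum>i<m. c i * gs i x)"
      by (rule sum.cong) (auto simp: c'_def gs'_def)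
    then show "h x + g x = (\<Sum>i<Suc m. c' i * gs' i x)"
      unfolding he by (simp add: c'_def gs'_def)
  qed
  ultimately show ?thesis unfolding Cc_def by blast
qed

lemma main_induct:
  assumes lc: "locally_qc_Hausdorff TYPE('a::topological_space)"
  shows "Hfam U K n \<Longrightarrow> compact M \<Longrightarrow> M \<subseteq> (\<Union>j<n. U j) \<Longrightarrow>
         {x. (f::'a \<Rightarrow> complex) x \<noteq> 0} \<subseteq> M \<Longrightarrow> good f \<Longrightarrow> f \<in> Cc"
proof (induction n arbitrary: f M)
  case 0
  then have "f = (\<lambda>x. 0)" by auto
  then show ?case using Cc_zero by simp
next
  case (Suc n)
  note H = Suc.prems(1) and cM = Suc.prems(2) and MU = Suc.prems(3) and fM = Suc.prems(4)
    and gf = Suc.prems(5)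
  obtain W C where WC: "\<forall>j<Suc n. open (W j) \<and> W j \<subseteq> C j \<and> C j \<subseteq> U j \<and> compact (C j)"
    and MW: "M \<subseteq> (\<Union>j<Suc n. W j)"
    using shrink[OF H cM MU] by blast
  have Hn: "Hfam U K n" using H unfolding Hfam_def by auto
  have Un: "open (U n)" "U n \<subseteq> K n" "compact (K n)" "Hausdorff_space (subtopology euclidean (K n))"
    using H unfolding Hfam_def by auto
  have Wn: "open (W n)" "W n \<subseteq> C n" "C n \<subseteq> U n" "compact (C n)" using WC by auto
  define Ob where "Ob = (\<Union>j<n. W j)"
  have oO: "open Ob" unfolding Ob_def using WC by auto
  define B where "B = U n - Ob"
  have fzero: "f x = 0" if "x \<notin> Ob" "x \<notin> W n" for x
  proof -
    have "x \<notin> (\<Union>j<Suc n. W j)" using that unfolding Ob_def by (auto simp: lessThan_Suc)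
    then show ?thesis using MW fM by blast
  qed
  have UH: "Hausdorff_space (subtopology euclidean (U n))" using open_Hausdorff_sub Un(2,4) by blast
  have contB: "continuous_on B f"
    unfolding continuous_on_def
  proof (intro ballI)
    fix a assume aB: "a \<in> B"
    show "(f \<longlongrightarrow> f a) (at a within B)"
    proof (rule tendstoI)
      fix e :: real assume e: "0 < e"
      show "eventually (\<lambda>x. dist (f x) (f a) < e) (at a within B)"
      proof (rule ccontr)
        assume ne: "\<not> eventually (\<lambda>x. dist (f x) (f a) < e) (at a within B)"
        let ?F = "inf (at a within B) (principal {x. \<not> dist (f x) (f a) < e})"
        have "?F \<noteq> bot" using ne by (simp add: trivial_limit_def eventually_inf_principal)
        then obtain G where G: "G \<le> ?F" "ultra G" using ex_ultra by blast
        have Gbot: "G \<noteq> bot" using G(2) unfolding ultra_def by blast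
        have "at a within B \<le> nhds a" unfolding at_within_def by (rule inf_le1)
        then have Ga: "G \<le> nhds a" using G(1) by (meson inf_le1 order_trans)
        have "at a within B \<le> principal (B - {a})" unfolding at_within_def by (rule inf_le2)
        then have "G \<le> principal (B - {a})" using G(1) by (meson inf_le1 order_trans)
        then have evB: "eventually (\<lambda>x. x \<in> B) G" unfolding le_principal by (rule eventually_mono) auto
        have "G \<le> principal {x. \<not> dist (f x) (f a) < e}" using G(1) by (meson inf_le2 order_trans)
        then have evd: "eventually (\<lambda>x. \<not> dist (f x) (f a) < e) G" unfolding le_principal by simp
        define S where "S = {s. G \<le> nhds s}"
        have SHX: "S \<in> HX" and lim: "limitin HX_topology (\<lambda>x. {x}) S G"
          using ultra_HX[OF G(2) Ga] unfolding S_def by auto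
        have aS: "a \<in> S" using Ga unfolding S_def by simp
        have aU: "a \<in> U n" using aB unfolding B_def by blast
        have "(f \<longlongrightarrow> infsum f S) G" using gf Gbot SHX lim unfolding good_def by blast
        moreover have "infsum f S = infsum f {a}"
        proof (rule infsum_cong_neutral)
          fix s assume s: "s \<in> S - {a}"
          have sU: "s \<notin> U n"
          proof
            assume "s \<in> U n"
            then have "a = s" using HX_Hausdorff_le1[OF Un(1) UH SHX aS _ aU] s by blast
            then show False using s by blast
          qed
          have sW: "s \<notin> W j" if j: "j < n" for j
          proof
            assume sWj: "s \<in> W j"
            have "open (W j)" using WC j by auto
            then have "eventually (\<lambda>x. x \<in> W j) G" using s sWj unfolding S_def le_nhds by blast
            then have "eventually (\<lambda>x. x \<in> W j \<and> x \<in> B) G" using evB by (rule eventually_conj)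
            then obtain x where "x \<in> W j" "x \<in> B" using eventually_happens'[OF Gbot] by blast
            then show False unfolding B_def Ob_def using j by blast
          qed
          have "s \<notin> Ob" using sW unfolding Ob_def by blast
          moreover have "s \<notin> W n" using sU Wn(2,3) by blast
          ultimately show "f s = 0" by (rule fzero)
        qed (use aS in auto)
        ultimately have "(f \<longlongrightarrow> f a) G" by simp
        then have "eventually (\<lambda>x. dist (f x) (f a) < e) G" using e by (rule tendstoD)
        then have "eventually (\<lambda>x. False) G" using evd by (rule eventually_elim2) auto
        then show False using Gbot by (simp add: eventually_False)
      qed
    qed
  qed
  let ?X = "subtopology euclidean (K n)"
  define D1 where "D1 = C n - Ob"
  define D2 where "D2 = K n - W n"
  define d where "d x = (if x \<in> W n then f x else 0)" for x
  have cs: "compact_space ?X" using compact_space_subtopology[of euclidean "K n"] Un(3) by simp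
  have normal: "normal_space ?X" using compact_Hausdorff_or_regular_imp_normal_space cs Un(4) by blast
  have CK: "C n \<subseteq> K n" using Wn Un by blast
  have "compactin ?X (C n)" using Wn(4) CK by (simp add: compactin_subtopology)
  then have cC: "closedin ?X (C n)" by (rule compactin_imp_closedin[OF Un(4)])
  have "closedin ?X (K n \<inter> -Ob)" using oO by (intro closedin_closed_Int) auto
  then have "closedin ?X (C n \<inter> (K n \<inter> -Ob))" using cC by blast
  moreover have "C n \<inter> (K n \<inter> -Ob) = D1" unfolding D1_def using CK by blast
  ultimately have cD1: "closedin ?X D1" by simp
  have "closedin ?X (K n \<inter> -W n)" using Wn(1) by (intro closedin_closed_Int) auto
  moreover have "K n \<inter> -W n = D2" unfolding D2_def by blast
  ultimately have cD2: "closedin ?X D2" by simp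
  have cD: "closedin ?X (D1 \<union> D2)" using cD1 cD2 by blast
  have D1K: "D1 \<subseteq> K n" and D2K: "D2 \<subseteq> K n" using CK unfolding D1_def D2_def by auto
  have dD1: "d x = f x" if "x \<in> D1" for x
    using that fzero unfolding d_def D1_def by auto
  have contd: "continuous_on (D1 \<union> D2) d"
  proof (rule continuous_on_Un_local)
    show "closedin (subtopology euclidean (D1 \<union> D2)) D1"
      using cD1 D1K D2K by (meson closedin_subset_trans sup_ge1 Un_least)
    show "closedin (subtopology euclidean (D1 \<union> D2)) D2"
      using cD2 D1K D2K by (meson closedin_subset_trans sup_ge2 Un_least)
    have "D1 \<subseteq> B" unfolding D1_def B_def using Wn by blast
    then have "continuous_on D1 f" using contB continuous_on_subset by blast
    then show "continuous_on D1 d" using dD1 continuous_on_eq by metis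
    show "continuous_on D2 d"
      by (rule continuous_on_eq[OF continuous_on_const]) (auto simp: d_def D2_def)
  qed
  have subD: "subtopology ?X (D1 \<union> D2) = subtopology euclidean (D1 \<union> D2)"
    using D1K D2K by (simp add: subtopology_subtopology Int_absorb1)
  have "continuous_map (subtopology ?X (D1 \<union> D2)) euclideanreal (\<lambda>x. Re (d x))"
    unfolding subD continuous_map_iff_continuous using contd by (intro continuous_intros)
  then obtain g1 where g1: "continuous_map ?X euclideanreal g1" "\<And>x. x \<in> D1 \<union> D2 \<Longrightarrow> g1 x = Re (d x)"
    using Tietze_extension_realinterval[OF normal cD, of UNIV] by auto
  have "continuous_map (subtopology ?X (D1 \<union> D2)) euclideanreal (\<lambda>x. Im (d x))"
    unfolding subD continuous_map_iff_continuous using contd by (intro continuous_intros)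
  then obtain g2 where g2: "continuous_map ?X euclideanreal g2" "\<And>x. x \<in> D1 \<union> D2 \<Longrightarrow> g2 x = Im (d x)"
    using Tietze_extension_realinterval[OF normal cD, of UNIV] by auto
  define e where "e x = complex_of_real (g1 x) + \<i> * complex_of_real (g2 x)" for x
  have conte: "continuous_on (K n) e"
    using g1(1) g2(1) unfolding e_def continuous_map_iff_continuous by (intro continuous_intros)
  have eD: "e x = d x" if "x \<in> D1 \<union> D2" for x
    using g1(2)[OF that] g2(2)[OF that] unfolding e_def by (simp add: complex_eq_iff)
  define g where "g x = (if x \<in> W n then e x else 0)" for x
  have gK: "g x = e x" if "x \<in> K n" for x
  proof (cases "x \<in> W n")
    case False
    then have "x \<in> D2" using that unfolding D2_def by blast
    then show ?thesis using eD False unfolding g_def d_def by auto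
  qed (simp add: g_def)
  have gen: "Cc_generator g"
    unfolding Cc_generator_def
  proof (intro exI[of _ "U n"] conjI allI impI)
    show "open (U n)" by (rule Un(1))
    show "Hausdorff_space (subtopology euclidean (U n))" by (rule UH)
    show "continuous_on (U n) g"
      by (rule continuous_on_eq[OF continuous_on_subset[OF conte Un(2)]]) (use gK Un(2) in auto)
    have cCU: "compactin (subtopology euclidean (U n)) (C n)" using Wn by (simp add: compactin_subtopology)
    then have clCU: "closedin (subtopology euclidean (U n)) (C n)" by (rule compactin_imp_closedin[OF UH])
    have "{x \<in> U n. g x \<noteq> 0} \<subseteq> C n" using Wn unfolding g_def by auto
    then have "(subtopology euclidean (U n)) closure_of {x \<in> U n. g x \<noteq> 0} \<subseteq> C n"
      by (rule closure_of_minimal[OF _ clCU])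
    then show "compactin (subtopology euclidean (U n))
         ((subtopology euclidean (U n)) closure_of {x \<in> U n. g x \<noteq> 0})"
      using closed_compactin[OF cCU] closedin_closure_of by blast
  next
    fix x assume "x \<notin> U n"
    then show "g x = 0" using Wn unfolding g_def by auto
  qed
  have "good (\<lambda>x. f x + -1 * g x)"
    by (rule good_add[OF lc gf good_scale[OF good_generator[OF gen]]])
  moreover have "(\<lambda>x. f x + -1 * g x) = (\<lambda>x. f x - g x)" by auto
  ultimately have gfg: "good (\<lambda>x. f x - g x)" by simp
  define M' where "M' = (\<Union>j<n. C j)"
  have Cj: "compact (C j)" "C j \<subseteq> U j" if "j < n" for j using WC that by auto
  have cM': "compact M'" unfolding M'_def by (rule compact_UN) (auto intro: Cj)
  have M'U: "M' \<subseteq> (\<Union>j<n. U j)" unfolding M'_def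
  proof (rule UN_mono)
    fix j assume "j \<in> {..<n}" then show "C j \<subseteq> U j" using Cj(2) by simp
  qed simp
  have supp: "{x. f x - g x \<noteq> 0} \<subseteq> M'"
  proof
    fix x assume x: "x \<in> {x. f x - g x \<noteq> 0}"
    show "x \<in> M'"
    proof (cases "x \<in> Ob")
      case True
      then obtain j where j: "j < n" "x \<in> W j" unfolding Ob_def by blast
      have "W j \<subseteq> C j" using WC j(1) by simp
      then show ?thesis unfolding M'_def using j by blast
    next
      case False
      show ?thesis
      proof (cases "x \<in> W n")
        case True
        then have "x \<in> D1" unfolding D1_def using False Wn by blast
        then have "g x = f x" using eD dD1 True unfolding g_def by auto
        then show ?thesis using x by simp
      next
        case nW: False
        then show ?thesis using x fzero[OF False nW] unfolding g_def by simp
      qed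
    qed
  qed
  have "(\<lambda>x. f x - g x) \<in> Cc" by (rule Suc.IH[OF Hn cM' M'U supp gfg])
  then have "(\<lambda>x. (f x - g x) + g x) \<in> Cc" using gen by (rule Cc_add_gen)
  then show ?case by simp
qed

theorem proposition4p1:
  fixes f :: "'a::topological_space \<Rightarrow> complex"
  assumes "locally_qc_Hausdorff TYPE('a)"
  shows "f \<in> Cc \<longleftrightarrow>
           (rel_qcompact {x. f x \<noteq> 0} \<and>
            (\<forall>(F::'a filter) S. F \<noteq> bot \<and> S \<in> HX \<and> limitin HX_topology (\<lambda>x. {x}) S F
                \<longrightarrow> (f \<longlongrightarrow> infsum f S) F))"
proof
  assume "f \<in> Cc"
  then have "good f" by (rule Cc_good[OF assms])
  then show "rel_qcompact {x. f x \<noteq> 0} \<and>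
            (\<forall>(F::'a filter) S. F \<noteq> bot \<and> S \<in> HX \<and> limitin HX_topology (\<lambda>x. {x}) S F
                \<longrightarrow> (f \<longlongrightarrow> infsum f S) F)"
    unfolding good_def .
next
  assume R: "rel_qcompact {x. f x \<noteq> 0} \<and>
            (\<forall>(F::'a filter) S. F \<noteq> bot \<and> S \<in> HX \<and> limitin HX_topology (\<lambda>x. {x}) S F
                \<longrightarrow> (f \<longlongrightarrow> infsum f S) F)"
  then have gf: "good f" unfolding good_def .
  obtain Kc where Kc: "compact Kc" "{x. f x \<noteq> 0} \<subseteq> Kc" using R unfolding rel_qcompact_def by blast
  have "\<forall>x::'a. \<exists>U. \<exists>K. open U \<and> x \<in> U \<and> U \<subseteq> K \<and> compact K \<and> Hausdorff_space (subtopology euclidean K)"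
    using assms unfolding locally_qc_Hausdorff_def by blast
  then obtain UU :: "'a \<Rightarrow> 'a set" where
    "\<forall>x. \<exists>K. open (UU x) \<and> x \<in> UU x \<and> UU x \<subseteq> K \<and> compact K \<and> Hausdorff_space (subtopology euclidean K)"
    by (rule choice[THEN exE]) blast
  then obtain KK :: "'a \<Rightarrow> 'a set" where
    UK: "\<forall>x. open (UU x) \<and> x \<in> UU x \<and> UU x \<subseteq> KK x \<and> compact (KK x) \<and> Hausdorff_space (subtopology euclidean (KK x))"
    by (rule choice[THEN exE]) blast
  obtain T where T: "T \<subseteq> Kc" "finite T" "Kc \<subseteq> (\<Union>x\<in>T. UU x)"
    by (rule compactE_image[OF Kc(1), of Kc UU]) (use UK in auto)
  obtain n :: nat and h where h: "T = h ` {i. i < n}"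
    using finite_imp_nat_seg_image_inj_on[OF T(2)] by blast
  have H: "Hfam (\<lambda>j. UU (h j)) (\<lambda>j. KK (h j)) n" unfolding Hfam_def using UK by simp
  have "Kc \<subseteq> (\<Union>j<n. UU (h j))" using T(3) unfolding h by (auto simp: lessThan_def)
  then show "f \<in> Cc" by (rule main_induct[OF assms H Kc(1) _ Kc(2) gf])
qed

end
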